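(* (1) Every $\alpha_{2^-}$ topological space is locally Ramsey. (2) Every $\alpha_{2^-}$ topological group is Ramsey.
   Context: A countably infinite set $A$ in a space $X$ converges to $x\in X$ if $x\notin A$ and every neighborhood of $x$ contains all but finitely many elements of $A$. $\lim_m x_{nm}=x$ means $x_{nm}\neq x$ for all $m$ and every neighborhood of $x$ contains $x_{nm}$ for all but finitely many $m$. A space $X$ is $\alpha_{2^-}$ if for each $x\in X$, whenever $\lim_m x_{nm}=x$ for all $n\in\mathbb N$, there are $m_1<m_2<\dots$ such that $\bigcup_n\{x_{1m_n},\dots,x_{nm_n}\}$ converges to $x$. A space $X$ is locally Ramsey if for each $x\in X$, whenever $\lim_m x_{nm}=x$ for all $n$, there is an infinite $I\subseteq\mathbb N$ such that $\{x_{nm}: n,m\in I,\ n<m\}$ converges to $x$. A space $X$ is Ramsey (Nogura–Shakhmatov) if whenever $\lim_n\lim_m x_{nm}=x$ (i.e., $\lim_m x_{nm}=x_n$ for each $n$ and $\lim_n x_n=x$), there is an infinite $I\subseteq\mathbb N$ such that for each neighborhood $U$ of $x$ there is $k$ with $\{x_{nm}: k<n<m,\ n,m\in I\}\subseteq U$. *)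

theory Defs
  imports "HOL-Analysis.Analysis"
begin

text \<open>Sequence convergence in the paper's sense: all terms differ from the limit.\<close>
definition seq_conv :: "(nat \<Rightarrow> 'a::topological_space) \<Rightarrow> 'a \<Rightarrow> bool" where
  "seq_conv s x \<longleftrightarrow> (\<forall>m. s m \<noteq> x) \<and> (s \<longlonglongrightarrow> x)"

definition set_conv :: "'a::topological_space set \<Rightarrow> 'a \<Rightarrow> bool" where
  "set_conv A x \<longleftrightarrow> countable A \<and> infinite A \<and> x \<notin> A \<and>
     (\<forall>U. open U \<and> x \<in> U \<longrightarrow> finite (A - U))"

text \<open>alpha_{2-}; indices are 0-based: the union over n of x_{i,m_n} for i \<le> n.\<close>
definition alpha2minus :: "'a::topological_space itself \<Rightarrow> bool" where
  "alpha2minus _ \<longleftrightarrow> (\<forall>(x::'a) (xs :: nat \<Rightarrow> nat \<Rightarrow> 'a).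
     (\<forall>n. seq_conv (xs n) x) \<longrightarrow>
     (\<exists>ms. strict_mono ms \<and> set_conv (\<Union>n. {xs i (ms n) | i. i \<le> n}) x))"

definition locally_ramsey :: "'a::topological_space itself \<Rightarrow> bool" where
  "locally_ramsey _ \<longleftrightarrow> (\<forall>(x::'a) (xs :: nat \<Rightarrow> nat \<Rightarrow> 'a).
     (\<forall>n. seq_conv (xs n) x) \<longrightarrow>
     (\<exists>I. infinite I \<and> set_conv {xs n m | n m. n \<in> I \<and> m \<in> I \<and> n < m} x))"

text \<open>Ramsey in the sense of Nogura--Shakhmatov.\<close>
definition ramsey_space :: "'a::topological_space itself \<Rightarrow> bool" where
  "ramsey_space _ \<longleftrightarrow> (\<forall>(x::'a) (xn :: nat \<Rightarrow> 'a) (xs :: nat \<Rightarrow> nat \<Rightarrow> 'a).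
     (\<forall>n. seq_conv (xs n) (xn n)) \<and> seq_conv xn x \<longrightarrow>
     (\<exists>I. infinite I \<and> (\<forall>U. open U \<and> x \<in> U \<longrightarrow>
        (\<exists>k. {xs n m | n m. k < n \<and> n < m \<and> n \<in> I \<and> m \<in> I} \<subseteq> U))))"

end

theory Submission
  imports Defs
begin

lemma t1_at:
  assumes a: "alpha2minus TYPE('a::topological_space)" and yx: "(y::'a) \<noteq> x"
  shows "\<exists>U. open U \<and> x \<in> U \<and> y \<notin> U"
proof (rule ccontr)
  assume "\<not> ?thesis"
  hence "\<forall>U. open U \<and> x \<in> U \<longrightarrow> y \<in> U" by blast
  hence "(\<lambda>m::nat. y) \<longlonglongrightarrow> x"
    by (intro topological_tendstoI) auto
  hence "\<forall>n::nat. seq_conv (\<lambda>m. y) x" using yx by (simp add: seq_conv_def)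
  then have "\<exists>ms::nat\<Rightarrow>nat. strict_mono ms \<and> set_conv (\<Union>n. {(\<lambda>n m. y) i (ms n) | i. i \<le> (n::nat)}) x"
    using spec[OF spec[OF a[unfolded alpha2minus_def], of x], of "\<lambda>n m. y"] by auto
  then obtain ms :: "nat \<Rightarrow> nat" where "set_conv (\<Union>n. {(\<lambda>n m. y) i (ms n) | i. i \<le> (n::nat)}) x"
    by blast
  moreover have "(\<Union>n. {(\<lambda>n m. y) i (ms n) | i. i \<le> (n::nat)}) = {y}" by auto
  ultimately show False by (simp add: set_conv_def)
qed

lemma finite_preim:
  assumes T1: "\<And>y. y \<noteq> x \<Longrightarrow> \<exists>U. open U \<and> x \<in> U \<and> y \<notin> U"
    and s: "seq_conv s x" and F: "finite F" and xF: "x \<notin> F"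
  shows "finite {m::nat. s m \<in> F}"
proof -
  have "{m. s m \<in> F} = (\<Union>y\<in>F. {m. s m = y})" by auto
  moreover have "finite {m. s m = y}" if "y \<in> F" for y
  proof -
    from that xF T1 obtain U where U: "open U" "x \<in> U" "y \<notin> U" by metis
    from s have "s \<longlonglongrightarrow> x" by (simp add: seq_conv_def)
    with U have "eventually (\<lambda>m. s m \<in> U) sequentially" by (simp add: topological_tendstoD)
    hence "finite {m. \<not> s m \<in> U}" by (simp add: eventually_cofinite flip: cofinite_eq_sequentially)
    moreover have "{m. s m = y} \<subseteq> {m. \<not> s m \<in> U}" using U by auto
    ultimately show ?thesis by (rule finite_subset[rotated])
  qed
  ultimately show ?thesis using F by simp
qed

lemma core:
  fixes ys :: "nat \<Rightarrow> nat \<Rightarrow> 'a::topological_space"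
  assumes T1: "\<And>y. y \<noteq> x \<Longrightarrow> \<exists>U. open U \<and> x \<in> U \<and> y \<notin> U"
    and conv: "\<And>n. seq_conv (ys n) x"
    and ms: "strict_mono ms"
    and A: "A = (\<Union>n. {ys i (ms n) | i. i \<le> n})"
  shows "\<exists>g::nat\<Rightarrow>nat. strict_mono g \<and> (\<forall>i j. i < j \<longrightarrow> ys (g i) (g j) \<in> A)
           \<and> (\<forall>y. finite {(i,j). i < j \<and> ys (g i) (g j) = y})"
proof -
  define Old where "Old c = (\<lambda>(a,b). ys a b) ` ({..c} \<times> {..c})" for c
  define Bad where "Bad c = (\<Union>a\<in>{..c}. ms -` {m. ys a m \<in> Old c})" for c
  have finOld: "finite (Old c)" for c unfolding Old_def by simp
  have xOld: "x \<notin> Old c" for c using conv unfolding Old_def seq_conv_def by auto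
  have finBad: "finite (Bad c)" for c
    unfolding Bad_def
  proof (intro finite_UN_I)
    show "finite {..c}" by simp
    fix a show "finite (ms -` {m. ys a m \<in> Old c})"
      apply (rule finite_vimageI)
      using finite_preim[OF T1 conv finOld xOld] strict_mono_imp_inj_on[OF ms]
      by auto
  qed
  define K where "K c = (LEAST k. k > c \<and> k \<notin> Bad c)" for c
  have K: "K c > c \<and> K c \<notin> Bad c" for c
  proof -
    have "finite (Bad c \<union> {..c})" using finBad by simp
    then obtain k where "k \<notin> Bad c \<union> {..c}" using ex_new_if_finite[OF infinite_UNIV_nat] by blast
    hence "k > c \<and> k \<notin> Bad c" by auto
    thus ?thesis unfolding K_def by (rule LeastI)
  qed
  define nxt where "nxt c = ms (K c)" for c
  define g where "g j = (nxt ^^ j) (ms 0)" for j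
  have gS: "g (Suc j) = ms (K (g j))" for j by (simp add: g_def nxt_def)
  have step: "g j < g (Suc j)" for j
    using K[of "g j"] seq_suble[OF ms, of "K (g j)"] gS[of j] by simp
  have sm: "strict_mono g" using step by (simp add: strict_mono_Suc_iff)
  have memA: "ys (g i) (g j) \<in> A" if "i < j" for i j
  proof -
    obtain j' where j: "j = Suc j'" using \<open>i < j\<close> gr0_implies_Suc[of j] by auto
    have "g i \<le> g j'" using that j sm by (simp add: strict_mono_less_eq)
    also have "\<dots> < K (g j')" using K by simp
    finally have "g i \<le> K (g j')" by simp
    thus ?thesis unfolding A j gS by blast
  qed
  have diff: "ys (g i) (g j) \<noteq> ys (g i') (g j')" if "i < j" "i' < j'" "j < j'" for i j i' j'
  proof -
    obtain j'' where j'': "j' = Suc j''" using \<open>i' < j'\<close> gr0_implies_Suc[of j'] by auto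
    let ?c = "g j''"
    have "g i \<le> ?c" "g j \<le> ?c" "g i' \<le> ?c" using that j'' sm by (simp_all add: strict_mono_less_eq)
    hence inOld: "ys (g i) (g j) \<in> Old ?c" unfolding Old_def by force
    have "K ?c \<notin> Bad ?c" using K by simp
    hence "ys (g i') (ms (K ?c)) \<notin> Old ?c" using \<open>g i' \<le> ?c\<close> unfolding Bad_def by auto
    thus ?thesis using inOld j'' gS by auto
  qed
  have fin: "finite {(i,j). i < j \<and> ys (g i) (g j) = y}" for y
  proof (cases "{(i,j). i < j \<and> ys (g i) (g j) = y} = {}")
    case True thus ?thesis by (metis finite.emptyI)
  next
    case False
    then obtain i0 j0 where p0: "i0 < j0" "ys (g i0) (g j0) = y" by auto
    have jj: "j = j0" if ij: "i < j" "ys (g i) (g j) = y" for i j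
      using diff[of i j i0 j0] diff[of i0 j0 i j] p0 ij by (metis linorder_neqE_nat)
    have "{(i,j). i < j \<and> ys (g i) (g j) = y} \<subseteq> {..j0} \<times> {j0}"
      using jj by fastforce
    thus ?thesis by (rule finite_subset) simp
  qed
  show ?thesis by (intro exI[of _ g] conjI allI impI sm memA fin)
qed

lemma bad_finite:
  fixes g :: "nat \<Rightarrow> nat"
  assumes fin: "\<And>y. finite {(i,j). i < j \<and> ys (g i) (g j) = y}"
    and memA: "\<And>i j. i < j \<Longrightarrow> ys (g i) (g j) \<in> A"
    and F: "finite (A - U)"
  shows "finite {(i::nat,j::nat). i < j \<and> ys (g i) (g j) \<notin> U}"
proof -
  have "{(i,j). i < j \<and> ys (g i) (g j) \<notin> U} \<subseteq> (\<Union>y\<in>A - U. {(i,j). i < j \<and> ys (g i) (g j) = y})"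
    using memA by auto
  moreover have "finite (\<Union>y\<in>A - U. {(i,j). i < j \<and> ys (g i) (g j) = y})"
    using F fin by blast
  ultimately show ?thesis by (rule finite_subset)
qed

lemma part1:
  assumes a: "alpha2minus TYPE('a::topological_space)"
  shows "locally_ramsey TYPE('a)"
  unfolding locally_ramsey_def
proof (intro allI impI)
  fix x :: 'a and xs :: "nat \<Rightarrow> nat \<Rightarrow> 'a"
  assume conv: "\<forall>n. seq_conv (xs n) x"
  have T1: "\<And>y. y \<noteq> x \<Longrightarrow> \<exists>U. open U \<and> x \<in> U \<and> y \<notin> U" using t1_at[OF a] by blast
  from a conv obtain ms :: "nat \<Rightarrow> nat" where ms: "strict_mono ms"
    and A: "set_conv (\<Union>n. {xs i (ms n) | i. i \<le> n}) x"
    unfolding alpha2minus_def by blast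
  define A' where "A' = (\<Union>n. {xs i (ms n) | i. i \<le> n})"
  from core[OF T1 conv[rule_format] ms A'_def] obtain g :: "nat \<Rightarrow> nat" where sm: "strict_mono g"
    and memA: "\<And>i j. i < j \<Longrightarrow> xs (g i) (g j) \<in> A'"
    and fin: "\<And>y. finite {(i,j). i < j \<and> xs (g i) (g j) = y}" by blast
  define B where "B = {xs n m | n m. n \<in> range g \<and> m \<in> range g \<and> n < m}"
  have B: "B = {xs (g i) (g j) | i j. i < j}"
    unfolding B_def by (auto simp: strict_mono_less[OF sm]; metis rangeI strict_mono_less[OF sm])
  have BA: "B \<subseteq> A'" unfolding B using memA by auto
  have "set_conv B x"
    unfolding set_conv_def
  proof (intro conjI allI impI)
    show "countable B" using A BA unfolding A'_def set_conv_def by (meson countable_subset)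
    show "infinite B"
    proof
      assume fB: "finite B"
      have "{(i,j). i < j} \<subseteq> (\<Union>y\<in>B. {(i::nat,j::nat). i < j \<and> xs (g i) (g j) = y})"
        unfolding B by auto
      moreover have "finite (\<Union>y\<in>B. {(i::nat,j::nat). i < j \<and> xs (g i) (g j) = y})"
        using fB fin by blast
      ultimately have "finite {(i::nat,j::nat). i < j}" by (rule finite_subset)
      moreover have "range (\<lambda>j. (0::nat, Suc j)) \<subseteq> {(i,j). i < j}" by auto
      moreover have "infinite (range (\<lambda>j. (0::nat, Suc j)))"
        by (rule range_inj_infinite) (auto simp: inj_def)
      ultimately show False using finite_subset by blast
    qed
    show "x \<notin> B" unfolding B using conv by (auto simp: seq_conv_def)
    fix U assume "open U \<and> x \<in> U"
    hence "finite (A' - U)" using A unfolding A'_def set_conv_def by blast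
    moreover have "B - U \<subseteq> A' - U" using BA by auto
    ultimately show "finite (B - U)" by (rule finite_subset[rotated])
  qed
  moreover have "infinite (range g)" by (rule range_inj_infinite) (rule strict_mono_imp_inj_on[OF sm])
  ultimately show "\<exists>I. infinite I \<and> set_conv {xs n m |n m. n \<in> I \<and> m \<in> I \<and> n < m} x"
    unfolding B_def by blast
qed

lemma part2:
  assumes a: "alpha2minus TYPE('b::topological_group_add)"
  shows "ramsey_space TYPE('b)"
  unfolding ramsey_space_def
proof (intro allI impI)
  fix x :: 'b and xn :: "nat \<Rightarrow> 'b" and xs :: "nat \<Rightarrow> nat \<Rightarrow> 'b"
  assume h: "(\<forall>n. seq_conv (xs n) (xn n)) \<and> seq_conv xn x"
  have T1: "\<And>y. y \<noteq> x \<Longrightarrow> \<exists>U. open U \<and> x \<in> U \<and> y \<notin> U" using t1_at[OF a] by blast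
  define ys where "ys n m = x + (- xn n + xs n m)" for n m
  have conv: "seq_conv (ys n) x" for n
  proof -
    have "xs n \<longlonglongrightarrow> xn n" using h by (simp add: seq_conv_def)
    hence "(\<lambda>m. x + (- xn n + xs n m)) \<longlonglongrightarrow> x + (- xn n + xn n)"
      by (intro tendsto_intros)
    moreover have "ys n m \<noteq> x" for m
    proof
      assume "ys n m = x"
      hence "- xn n + xs n m = 0" unfolding ys_def by (metis add.right_neutral add_left_cancel)
      hence "xs n m = xn n" by (metis add_minus_cancel add.right_neutral)
      thus False using h by (simp add: seq_conv_def)
    qed
    ultimately show ?thesis by (simp add: seq_conv_def ys_def[abs_def])
  qed
  from a conv obtain ms :: "nat \<Rightarrow> nat" where ms: "strict_mono ms"
    and A: "set_conv (\<Union>n. {ys i (ms n) | i. i \<le> n}) x"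
    unfolding alpha2minus_def by blast
  define A' where "A' = (\<Union>n. {ys i (ms n) | i. i \<le> n})"
  from core[OF T1 conv ms A'_def] obtain g :: "nat \<Rightarrow> nat" where sm: "strict_mono g"
    and memA: "\<And>i j. i < j \<Longrightarrow> ys (g i) (g j) \<in> A'"
    and fin: "\<And>y. finite {(i,j). i < j \<and> ys (g i) (g j) = y}" by blast
  have "infinite (range g)" by (rule range_inj_infinite) (rule strict_mono_imp_inj_on[OF sm])
  moreover have "\<exists>k. {xs n m |n m. k < n \<and> n < m \<and> n \<in> range g \<and> m \<in> range g} \<subseteq> U"
    if U: "open U" "x \<in> U" for U
  proof -
    have "((\<lambda>p. fst p + - x + snd p) \<longlongrightarrow> x + - x + x) (nhds x \<times>\<^sub>F nhds x)"
      by (intro tendsto_intros filterlim_fst filterlim_snd)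
    hence "eventually (\<lambda>p. fst p + - x + snd p \<in> U) (nhds x \<times>\<^sub>F nhds x)"
      using U by (intro topological_tendstoD) simp_all
    then obtain Pf Pg where Pf: "eventually Pf (nhds x)" and Pg: "eventually Pg (nhds x)"
      and PP: "\<And>a b. Pf a \<Longrightarrow> Pg b \<Longrightarrow> a + - x + b \<in> U"
      unfolding eventually_prod_filter by auto
    from Pg obtain W where W: "open W" "x \<in> W" "\<forall>b\<in>W. Pg b" unfolding eventually_nhds by blast
    have "xn \<longlonglongrightarrow> x" using h by (simp add: seq_conv_def)
    from eventually_compose_filterlim[OF Pf this] obtain N where N: "\<And>n. n \<ge> N \<Longrightarrow> Pf (xn n)"
      unfolding eventually_sequentially by blast
    have "finite (A' - W)" using A W unfolding A'_def set_conv_def by blast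
    from bad_finite[where ys=ys and g=g and A=A' and U=W, OF fin memA this]
    have fQ: "finite (fst ` {(i,j). i < j \<and> ys (g i) (g j) \<notin> W})" by simp
    obtain b where b: "\<And>i. i \<in> fst ` {(i,j). i < j \<and> ys (g i) (g j) \<notin> W} \<Longrightarrow> i < b"
      using finite_nat_bounded[OF fQ] by (auto simp: lessThan_def)
    show ?thesis
    proof (intro exI[of _ "max N (g b)"] subsetI)
      fix z assume "z \<in> {xs n m |n m. max N (g b) < n \<and> n < m \<and> n \<in> range g \<and> m \<in> range g}"
      then obtain i j where z: "z = xs (g i) (g j)" "max N (g b) < g i" "g i < g j" by auto
      have ij: "i < j" using z sm by (simp add: strict_mono_less)
      have "b < i" using z sm by (metis max_less_iff_conj strict_mono_less)
      hence "ys (g i) (g j) \<in> W" using b[of i] ij by force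
      hence "Pg (ys (g i) (g j))" using W by blast
      moreover have "Pf (xn (g i))" using N z by simp
      ultimately have "xn (g i) + - x + ys (g i) (g j) \<in> U" using PP by blast
      moreover have "xn (g i) + - x + ys (g i) (g j) = z"
        unfolding ys_def z by (simp only: add.assoc add_minus_cancel minus_add_cancel)
      ultimately show "z \<in> U" by simp
    qed
  qed
  ultimately show "\<exists>I. infinite I \<and> (\<forall>U. open U \<and> x \<in> U \<longrightarrow>
        (\<exists>k. {xs n m |n m. k < n \<and> n < m \<and> n \<in> I \<and> m \<in> I} \<subseteq> U))" by blast
qed

theorem proposition2p5:
  shows "(alpha2minus TYPE('a::topological_space) \<longrightarrow> locally_ramsey TYPE('a))
       \<and> (alpha2minus TYPE('b::topological_group_add) \<longrightarrow> ramsey_space TYPE('b))"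
  using part1 part2 by blast

end
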